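(* Let $P$ be an integer such that $P^2+4$ is square-free, and let $m\ge 0$ be an integer. Consider the equation $$\sigma_2(n)-n^2=V_{2m}(P,-1)\,n-V_{2m}(P,-1)^2+5$$ in positive integers $n$. Then every solution $n$ with $n>\big(|V_{2m}(P,-1)|+V_{2m}(P,-1)^2-5\big)^3$ is of one of the following forms (so all solutions not of these forms lie in the finite, computable range $n\le(|V_{2m}(P,-1)|+V_{2m}(P,-1)^2-5)^3$): (1) $n=V_{2k}(P,-1)\,V_{2k+2m}(P,-1)$ for some integer $k\ge 0$, with $V_{2k}(P,-1)$ and $V_{2k+2m}(P,-1)$ both prime; (2) $n=V_{2k}(P,-1)\,V_{2m-2k}(P,-1)$ for some integer $k$ with $0\le k\le m$ and $m\ne 2k$, with $V_{2k}(P,-1)$ and $V_{2m-2k}(P,-1)$ both prime.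
   Context: For a positive integer $n$ and $k\ge 0$, $\sigma_k(n)=\sum_{d\mid n,\ d>0} d^k$. For integers $P,Q$, the Lucas sequences are defined for $j\ge 0$ by $U_0(P,Q)=0$, $U_1(P,Q)=1$, $U_j(P,Q)=P\,U_{j-1}(P,Q)-Q\,U_{j-2}(P,Q)$ for $j>1$, and $V_0(P,Q)=2$, $V_1(P,Q)=P$, $V_j(P,Q)=P\,V_{j-1}(P,Q)-Q\,V_{j-2}(P,Q)$ for $j>1$. An integer is square-free if it is not divisible by the square of any prime. *)

theory Defs
  imports Main "HOL-Computational_Algebra.Squarefree" "HOL-Computational_Algebra.Primes"
begin

definition sigma :: "nat \<Rightarrow> nat \<Rightarrow> nat" where
  "sigma k n = (\<Sum>d\<in>{d. d dvd n \<and> d > 0}. d ^ k)"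

fun lucasV :: "int \<Rightarrow> int \<Rightarrow> nat \<Rightarrow> int" where
  "lucasV P Q 0 = 2"
| "lucasV P Q (Suc 0) = P"
| "lucasV P Q (Suc (Suc j)) = P * lucasV P Q (Suc j) - Q * lucasV P Q j"

end

theory Submission
  imports Defs
begin


fun Wc :: "int \<Rightarrow> nat \<Rightarrow> int" where
  "Wc c 0 = 2"
| "Wc c (Suc 0) = c^2 + 2"
| "Wc c (Suc (Suc k)) = (c^2+2) * Wc c (Suc k) - Wc c k"

fun Sc :: "int \<Rightarrow> nat \<Rightarrow> int" where
  "Sc c 0 = 0"
| "Sc c (Suc 0) = c"
| "Sc c (Suc (Suc k)) = (c^2+2) * Sc c (Suc k) - Sc c k"

lemma WS_step_pair:
  "(2 * Wc c (Suc k) = (c^2+2) * Wc c k + c*(c^2+4) * Sc c k \<and>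
    2 * Sc c (Suc k) = (c^2+2) * Sc c k + c * Wc c k) \<and>
   (2 * Wc c (Suc (Suc k)) = (c^2+2) * Wc c (Suc k) + c*(c^2+4) * Sc c (Suc k) \<and>
    2 * Sc c (Suc (Suc k)) = (c^2+2) * Sc c (Suc k) + c * Wc c (Suc k))"
proof (induction k)
  case 0
  then show ?case by (simp add: algebra_simps power2_eq_square)
next
  case (Suc k)
  then show ?case
  proof -
    have h: "2 * Wc c (Suc k) = (c^2+2) * Wc c k + c*(c^2+4) * Sc c k"
      "2 * Sc c (Suc k) = (c^2+2) * Sc c k + c * Wc c k"
      "2 * Wc c (Suc (Suc k)) = (c^2+2) * Wc c (Suc k) + c*(c^2+4) * Sc c (Suc k)"
      "2 * Sc c (Suc (Suc k)) = (c^2+2) * Sc c (Suc k) + c * Wc c (Suc k)"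
      using Suc by auto
    have "2 * Wc c (Suc (Suc (Suc k))) = (c^2+2) * Wc c (Suc (Suc k)) + c*(c^2+4) * Sc c (Suc (Suc k))"
      unfolding Wc.simps(3)[of c "Suc k"] Sc.simps(3)[of c "Suc k"] using h by algebra
    moreover have "2 * Sc c (Suc (Suc (Suc k))) = (c^2+2) * Sc c (Suc (Suc k)) + c * Wc c (Suc (Suc k))"
      unfolding Wc.simps(3)[of c "Suc k"] Sc.simps(3)[of c "Suc k"] using h by algebra
    ultimately show ?thesis using h by blast
  qed
qed

lemma A3: "c \<ge> 1 \<Longrightarrow> c^2 + 2 \<ge> (3::int)"
  using mult_mono[of 1 c 1 c] by (simp add: power2_eq_square)

lemma WS_step:
  "2 * Wc c (Suc k) = (c^2+2) * Wc c k + c*(c^2+4) * Sc c k"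
  "2 * Sc c (Suc k) = (c^2+2) * Sc c k + c * Wc c k"
  using WS_step_pair by blast+

lemma WS_norm: "Wc c k ^ 2 - (c^2+4) * Sc c k ^ 2 = 4"
proof (induction k)
  case 0 then show ?case by simp
next
  case (Suc k)
  have "4 * (Wc c (Suc k) ^ 2 - (c^2+4) * Sc c (Suc k) ^ 2)
     = (2 * Wc c (Suc k))^2 - (c^2+4) * (2 * Sc c (Suc k))^2"
    by (simp add: algebra_simps power2_eq_square)
  also have "\<dots> = ((c^2+2) * Wc c k + c*(c^2+4) * Sc c k)^2 - (c^2+4) * ((c^2+2) * Sc c k + c * Wc c k)^2"
    by (simp only: WS_step)
  also have "\<dots> = 4 * (Wc c k ^ 2 - (c^2+4) * Sc c k ^ 2)"
    by (simp add: algebra_simps power2_eq_square)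
  finally show ?case using Suc by simp
qed

lemma WS_pos:
  assumes "c \<ge> 1"
  shows "Wc c k \<ge> 2 \<and> Sc c k \<ge> 0"
proof (induction k)
  case 0 then show ?case by simp
next
  case (Suc k)
  have a: "2 * Wc c (Suc k) = (c^2+2) * Wc c k + c*(c^2+4) * Sc c k"
    "2 * Sc c (Suc k) = (c^2+2) * Sc c k + c * Wc c k" by (rule WS_step)+
  have "(c^2+2) * Wc c k \<ge> 3 * 2" using Suc A3[OF assms]
    by (intro mult_mono) auto
  moreover have "c*(c^2+4) * Sc c k \<ge> 0" using Suc assms by simp
  moreover have "(c^2+2) * Sc c k \<ge> 0" using Suc assms by simp
  moreover have "c * Wc c k \<ge> 0" using Suc assms by simp
  ultimately show ?case using a by linarith
qed

lemma W_mono_step: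
  assumes "c \<ge> 1"
  shows "Wc c (Suc k) > Wc c k" and "Sc c (Suc k) > 0"
proof -
  have a: "2 * Wc c (Suc k) = (c^2+2) * Wc c k + c*(c^2+4) * Sc c k"
    "2 * Sc c (Suc k) = (c^2+2) * Sc c k + c * Wc c k" by (rule WS_step)+
  have p: "Wc c k \<ge> 2" "Sc c k \<ge> 0" using WS_pos[OF assms] by auto
  have "(c^2+2) * Wc c k \<ge> 3 * Wc c k" using p A3[OF assms]
    by (intro mult_right_mono) auto
  moreover have "c*(c^2+4) * Sc c k \<ge> 0" using p assms by simp
  ultimately show "Wc c (Suc k) > Wc c k" using a p by linarith
  have "(c^2+2) * Sc c k \<ge> 0" using p assms by simp
  moreover have "c * Wc c k \<ge> 2" using p assms
    using mult_mono[of 1 c 2 "Wc c k"] by simp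
  ultimately show "Sc c (Suc k) > 0" using a by linarith
qed

lemma W_strict_mono:
  assumes "c \<ge> 1"
  shows "strict_mono (Wc c)"
  unfolding strict_mono_def using lift_Suc_mono_less[of "Wc c"] W_mono_step(1)[OF assms] by blast

lemma W_prod:
  "b \<le> a \<Longrightarrow> Wc c a * Wc c b = Wc c (a+b) + Wc c (a-b)"
proof (induction b arbitrary: a rule: less_induct)
  case (less b)
  show ?case
  proof (cases b)
    case 0 then show ?thesis by simp
  next
    case (Suc b1)
    show ?thesis
    proof (cases b1)
      case 0
      then obtain a1 where a1: "a = Suc a1" using less Suc by (cases a) auto
      show ?thesis using Suc 0 a1
        by (cases a1) (auto simp: algebra_simps)
    next
      case (Suc b2)
      have bb: "b = Suc (Suc b2)" using Suc \<open>b = Suc b1\<close> by simp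
      have i1: "Wc c a * Wc c (Suc b2) = Wc c (a + Suc b2) + Wc c (a - Suc b2)"
        using less bb by auto
      have i2: "Wc c a * Wc c b2 = Wc c (a + b2) + Wc c (a - b2)"
        using less bb by auto
      obtain r where r: "a - b2 = Suc (Suc r)" "a - Suc b2 = Suc r" "a - b = r"
        using less.prems bb by (metis Suc_diff_le Suc_le_D Suc_le_lessD diff_Suc_Suc le_Suc_eq less_Suc_eq_le Suc_diff_Suc)
      have e1: "a + b = Suc (Suc (a + b2))" "a + Suc b2 = Suc (a+b2)" using bb by auto
      have "Wc c a * Wc c b = (c^2+2) * (Wc c a * Wc c (Suc b2)) - Wc c a * Wc c b2"
        using bb by (simp add: algebra_simps)
      also have "\<dots> = Wc c (a+b) + Wc c (a-b)"
        unfolding i1 i2 r e1 by (simp add: algebra_simps)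
      finally show ?thesis .
    qed
  qed
qed

lemma W_double: "Wc c (2*k) = Wc c k ^ 2 - 2"
  using W_prod[of k k c] by (simp add: power2_eq_square mult_2)

lemma lucas_step4: "lucasV P (-1) (Suc (Suc (Suc (Suc j)))) = (P^2+2) * lucasV P (-1) (Suc (Suc j)) - lucasV P (-1) j"
  by (simp add: algebra_simps power2_eq_square)

lemma lucas_W: "lucasV P (-1) (2*k) = Wc \<bar>P\<bar> k \<and> lucasV P (-1) (2*(Suc k)) = Wc \<bar>P\<bar> (Suc k)"
proof (induction k)
  case 0 then show ?case by (simp add: numeral_2_eq_2 power2_eq_square algebra_simps)
next
  case (Suc k)
  have "2 * Suc (Suc k) = Suc (Suc (Suc (Suc (2*k))))" by simp
  then have "lucasV P (-1) (2 * Suc (Suc k)) = (P^2+2) * lucasV P (-1) (2*Suc k) - lucasV P (-1) (2*k)"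
    using lucas_step4[of P "2*k"] by (simp add: numeral_2_eq_2)
  then show ?case using Suc by simp
qed




lemma pell_aux:
  fixes c :: int
  assumes c: "c \<ge> 1"
  shows "\<And>x z. nat z = N \<Longrightarrow> x > 0 \<Longrightarrow> z \<ge> 0 \<Longrightarrow> x^2 - (c^2+4) * z^2 = 4 \<Longrightarrow> \<exists>k. x = Wc c k \<and> z = Sc c k"
proof (induction N rule: less_induct)
  case (less N x z)
  show ?case
  proof (cases "z = 0")
    case True
    then have "x^2 = 2^2" using less(5) by simp
    then have "x = 2" using less(3) by (smt (verit) power2_eq_iff)
    then show ?thesis using True by (intro exI[of _ 0]) simp
  next
    case False
    then have z1: "z \<ge> 1" using less(4) by simp
    have prodeq: "(x - c*z) * (x + c*z) = 4 * (z^2 + 1)"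
      using less(5) by (simp add: algebra_simps power2_eq_square)
    have "even (x - c*z)"
    proof (rule ccontr)
      assume "odd (x - c*z)"
      moreover have "x + c*z = (x - c*z) + 2*(c*z)" by simp
      ultimately have "odd (x + c*z)" by simp
      with \<open>odd (x - c*z)\<close> have "odd ((x - c*z) * (x + c*z))" by simp
      with prodeq show False by simp
    qed
    then obtain e where e: "x - c*z = 2*e" by blast
    have xe: "x = c*z + 2*e" using e by simp
    have rel: "e * (c*z + e) = z^2 + 1"
      using prodeq unfolding xe by (simp add: algebra_simps power2_eq_square)
    have epos: "e > 0"
    proof (rule ccontr)
      assume "\<not> e > 0"
      then have "e \<le> 0" by simp
      moreover have "c*z > 0" using c z1 by simp
      moreover have "z^2 + 1 > 0" by (simp add: add_pos_nonneg)
      moreover have "c*z + e > 0" using less(3) xe \<open>e \<le> 0\<close> by linarith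
      ultimately have "e * (c*z + e) \<le> 0" using \<open>e \<le> 0\<close> by (simp add: mult_nonpos_nonneg)
      then show False using rel \<open>z^2+1 > 0\<close> by linarith
    qed
    define w where "w = z - c*e"
    have w0: "w \<ge> 0"
    proof (rule ccontr)
      assume "\<not> w \<ge> 0"
      then have "c*e \<ge> z + 1" unfolding w_def by simp
      then have "(c*e)*z \<ge> (z+1)*z" using z1
        by (intro mult_right_mono) auto
      then have "e*(c*z) \<ge> (z+1)*z" by (simp add: ac_simps)
      moreover have "e*e > 0" using epos by simp
      ultimately have "e*(c*z+e) > z^2 + 1" using z1
        by (simp add: algebra_simps power2_eq_square)
      then show False using rel by simp
    qed
    have wlt: "w < z" unfolding w_def using c epos by simp
    have rel2: "e^2 = c*e*w + w^2 + 1"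
      using rel unfolding w_def by (simp add: algebra_simps power2_eq_square)
    define x' where "x' = 2*e - c*w"
    have x'pos: "x' > 0"
    proof (cases "w = 0")
      case True then show ?thesis using epos unfolding x'_def by simp
    next
      case False
      then have "w > 0" using w0 by simp
      have "e*e > (c*w)*e" using rel2 \<open>w > 0\<close>
        by (simp add: algebra_simps power2_eq_square add_pos_nonneg)
      then have "e > c*w" using epos by (simp add: mult_less_cancel_right)
      then show ?thesis unfolding x'_def using epos by simp
    qed
    have x'eq: "x'^2 - (c^2+4) * w^2 = 4"
    proof -
      have "x'^2 - (c^2+4) * w^2 = 4*(e^2 - c*e*w - w^2)"
        unfolding x'_def by (simp add: algebra_simps power2_eq_square)
      then show ?thesis using rel2 by simp
    qed
    obtain j where j: "x' = Wc c j" "w = Sc c j"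
    proof -
      have "nat w < N" using wlt less(2) w0 by simp
      from less(1)[OF this refl x'pos w0 x'eq] show ?thesis using that by blast
    qed
    have "2 * x = (c^2+2) * x' + c*(c^2+4) * w"
      unfolding x'_def w_def xe by (simp add: algebra_simps power2_eq_square)
    then have "x = Wc c (Suc j)" using WS_step(1)[of c j] j by simp
    moreover have "2 * z = (c^2+2) * w + c * x'"
      unfolding x'_def w_def xe by (simp add: algebra_simps power2_eq_square)
    then have "z = Sc c (Suc j)" using WS_step(2)[of c j] j by simp
    ultimately show ?thesis by blast
  qed
qed

lemma pell:
  fixes c x z :: int
  assumes "c \<ge> 1" "x > 0" "z \<ge> 0" "x^2 - (c^2+4) * z^2 = 4"
  shows "\<exists>k. x = Wc c k"
  using pell_aux[OF assms(1) refl assms(2-4)] by blast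

lemma sqf_dvd:
  fixes D t :: int
  assumes "squarefree D" "D dvd t^2"
  shows "D dvd t"
proof -
  have D0: "D \<noteq> 0" using assms(1) by auto
  define g where "g = gcd D t"
  have g0: "g \<noteq> 0" using D0 unfolding g_def by simp
  define h where "h = D div g"
  define s where "s = t div g"
  have hs: "D = g*h" "t = g*s" unfolding h_def s_def g_def by simp_all
  have cop: "coprime h s"
    unfolding h_def s_def g_def using D0 by (intro div_gcd_coprime) simp
  have "g*h dvd g*(g*s^2)" using assms(2) hs by (simp add: power2_eq_square ac_simps)
  then have "h dvd g*s^2" using g0 by simp
  then have "h dvd g" using cop by (simp add: coprime_dvd_mult_left_iff)
  then have "h*h dvd g*h" by simp
  then have "h^2 dvd D" using hs by (simp add: power2_eq_square)
  then have "h dvd 1" using assms(1) squarefreeD by blast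
  then have "g dvd t" "D dvd g" using hs by auto
  then show ?thesis by (rule dvd_trans[rotated])
qed



lemma divisors_pq:
  assumes "prime (p::nat)" "prime q"
  shows "{d. d dvd p*q \<and> d > 0} = {1,p,q,p*q}"
proof
  show "{d. d dvd p*q \<and> d > 0} \<subseteq> {1,p,q,p*q}"
  proof
    fix d assume "d \<in> {d. d dvd p*q \<and> d > 0}"
    then have "d dvd p*q" by simp
    then obtain d1 d2 where "d = d1*d2" "d1 dvd p" "d2 dvd q" by (rule dvd_productE)
    moreover have "d1 = 1 \<or> d1 = p" using assms(1) \<open>d1 dvd p\<close> prime_nat_iff by blast
    moreover have "d2 = 1 \<or> d2 = q" using assms(2) \<open>d2 dvd q\<close> prime_nat_iff by blast
    ultimately show "d \<in> {1,p,q,p*q}" by auto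
  qed
  show "{1,p,q,p*q} \<subseteq> {d. d dvd p*q \<and> d > 0}"
    using assms by (auto simp: prime_gt_0_nat)
qed

lemma sigma_pq:
  assumes "prime (p::nat)" "prime q" "p \<noteq> q"
  shows "sigma 2 (p*q) = 1 + p^2 + q^2 + (p*q)^2"
proof -
  have p1: "p > 1" "q > 1" using assms prime_gt_1_nat by auto
  have d: "p*q \<noteq> p" "p*q \<noteq> q" "p*q \<noteq> 1" using p1 by auto
  show ?thesis unfolding sigma_def divisors_pq[OF assms(1,2)] using p1 assms(3) d by simp
qed

lemma sigma_pp:
  assumes "prime (p::nat)"
  shows "sigma 2 (p*p) = 1 + p^2 + (p*p)^2"
proof -
  have p1: "p > 1" using assms prime_gt_1_nat by auto
  have d: "p*p \<noteq> p" "p*p \<noteq> 1" using p1 by auto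
  show ?thesis unfolding sigma_def divisors_pq[OF assms(1,1)] using p1 d by simp
qed

lemma sigma_p:
  assumes "prime (p::nat)"
  shows "sigma 2 p = 1 + p^2"
proof -
  have "{d. d dvd p \<and> d > 0} = {1,p}" using assms
    by (auto simp: prime_nat_iff prime_gt_0_nat) 
  then show ?thesis unfolding sigma_def using prime_gt_1_nat[OF assms] by simp
qed

lemma sigma_lower:
  assumes "n > 0" "A \<subseteq> {d. d dvd n \<and> d > 0}"
  shows "sigma 2 n \<ge> (\<Sum>d\<in>A. d^2)"
proof -
  have fin: "finite {d. d dvd (n::nat) \<and> d > 0}"
    by (rule finite_subset[of _ "{..n}"]) (use assms(1) dvd_imp_le in auto)
  show ?thesis unfolding sigma_def by (rule sum_mono2[OF fin assms(2)]) simp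
qed

lemma Bbound:
  fixes V :: int
  assumes "V \<ge> 3"
  shows "(\<bar>V\<bar> + V^2 - 5)^3 \<ge> V^3" "V^3 \<ge> V + 2"
proof -
  have "V^2 \<ge> 3*3" using assms mult_mono[of 3 V 3 V] by (simp add: power2_eq_square)
  then have "\<bar>V\<bar> + V^2 - 5 \<ge> V" using assms by simp
  then show "(\<bar>V\<bar> + V^2 - 5)^3 \<ge> V^3" using assms by (intro power_mono) auto
  have "V^3 = V*V^2" by (simp add: power2_eq_square power3_eq_cube)
  also have "\<dots> \<ge> V*9" using \<open>V^2 \<ge> 3*3\<close> assms by (intro mult_left_mono) auto
  finally show "V^3 \<ge> V + 2" using assms by simp
qed

lemma n_structure:
  fixes V :: int and n :: nat
  assumes V: "V \<ge> 2" and n0: "n > 0"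
    and E: "int (sigma 2 n) - int n ^ 2 = V * int n - V^2 + 5"
    and big: "int n > (\<bar>V\<bar> + V^2 - 5)^3"
  shows "\<exists>p q. prime p \<and> prime q \<and> p \<noteq> q \<and> n = p*q"
proof -
  have n2: "n \<ge> 2"
  proof (cases "V = 2")
    case True then show ?thesis using big n0 by simp
  next
    case False
    then have "V \<ge> 3" using V by simp
    from Bbound[OF this] big this show ?thesis by linarith
  qed
  define p where "p = (LEAST d. 1 < d \<and> d dvd n)"
  have ex: "1 < n \<and> n dvd n" using n2 by simp
  have p1: "1 < p" "p dvd n" using LeastI_ex[of "\<lambda>d. 1 < d \<and> d dvd n"] ex unfolding p_def by blast+
  have pmin: "\<And>e. 1 < e \<Longrightarrow> e dvd n \<Longrightarrow> p \<le> e" unfolding p_def by (rule Least_le) simp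
  have pprime: "prime p"
    unfolding prime_nat_iff
  proof (intro conjI allI impI)
    show "1 < p" by (rule p1)
    fix m assume "m dvd p"
    then have "m > 0" "m \<le> p" using p1 by (auto intro: dvd_imp_le gr0I)
    moreover have "m \<noteq> 1 \<Longrightarrow> p \<le> m" using \<open>m dvd p\<close> p1 \<open>m>0\<close> by (intro pmin) (auto intro: dvd_trans)
    ultimately show "m = 1 \<or> m = p" by linarith
  qed
  define t where "t = n div p"
  have nt: "n = p*t" unfolding t_def using p1 by simp
  have t0: "t > 0" using nt n0 by (simp add: gr0I)
  show ?thesis
  proof (cases "t = 1")
    case True
    then have "n = p" using nt by simp
    then have "int (sigma 2 n) = 1 + int n^2" using sigma_p[OF pprime] by simp
    with E have e1: "V * int n = V^2 - 4" by simp
    show ?thesis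
    proof (cases "V = 2")
      case True then show ?thesis using e1 n0 by simp
    next
      case False
      then have V3: "V \<ge> 3" using V by simp
      have "V * int n < V * V" using e1 by (simp add: power2_eq_square)
      then have "int n < V" using V by (simp add: mult_less_cancel_left)
      with Bbound[OF V3] big show ?thesis by linarith
    qed
  next
    case False
    then have t1: "t > 1" using t0 by simp
    show ?thesis
    proof (cases "\<exists>e. e dvd t \<and> 1 < e \<and> e < t")
      case True
      then obtain e where e: "e dvd t" "1 < e" "e < t" by blast
      define f where "f = t div e"
      have tf: "t = e*f" unfolding f_def using e by simp
      have "f \<noteq> 0" "f \<noteq> 1" using tf e t0 by auto
      then have f1: "f > 1" by linarith
      have "p \<le> e" using e nt by (intro pmin) auto
      moreover have "p \<le> f" using f1 nt tf by (intro pmin) auto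
      ultimately have tp: "p*p \<le> t" using tf by (simp add: mult_le_mono)
      have "p*1 < p*p" using p1 by (intro mult_strict_left_mono) auto
      then have ptl: "p < t" using tp by linarith
      have tn: "t < n" using nt p1 t0 by simp
      have "sigma 2 n \<ge> (\<Sum>d\<in>{1,p,t,n}. d^2)"
        using n0 nt p1 t0 by (intro sigma_lower) auto
      also have "(\<Sum>d\<in>{1,p,t,n}. d^2) = 1 + p^2 + t^2 + n^2"
        using p1 ptl tn by simp
      finally have "int (1 + p^2 + t^2 + n^2) \<le> int (sigma 2 n)"
        by (simp only: of_nat_le_iff)
      then have "int (sigma 2 n) \<ge> 1 + int p^2 + int t^2 + int n^2" by simp
      with E have ineq: "1 + int p^2 + int t^2 \<le> V * (int p * int t) - V^2 + 5"
        using nt by simp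
      show ?thesis
      proof (cases "V = 2")
        case True
        then have "(int t - int p)^2 \<le> 0" using ineq by (simp add: power2_eq_square algebra_simps)
        then have "int t = int p" by simp
        then show ?thesis using ptl by simp
      next
        case False
        then have V3: "V \<ge> 3" using V by simp
        have "V*V \<ge> 3*3" using V3 mult_mono[of 3 V 3 V] by simp
        moreover have "int p * int p \<ge> 0" by simp
        moreover have "V * V + (int p * int p + int t * int t) \<le> 4 + V * (int p * int t)"
          using ineq by (simp add: power2_eq_square algebra_simps)
        ultimately have "int t * int t < V * (int p * int t)" by linarith
        then have "int t * int t < (V * int p) * int t" by (simp add: mult.assoc)
        then have tlt: "int t < V * int p" using t0 by (simp add: mult_less_cancel_right)
        have "int (p * p) \<le> int t" using tp by (simp only: of_nat_le_iff)
        then have "int p * int p \<le> int t" by simp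
        then have "int p * int p < V * int p" using tlt by simp
        then have pV: "int p < V" using p1 by (simp add: mult_less_cancel_right)
        have "int n = int p * int t" using nt by simp
        also have "\<dots> < int p * (V * int p)" using tlt p1 by (simp add: mult_less_cancel_left)
        also have "\<dots> = V * (int p * int p)" by simp
        also have "\<dots> \<le> V * (V * V)"
          using pV p1 V3 by (intro mult_left_mono mult_mono) auto
        also have "\<dots> = V^3" by (simp add: power3_eq_cube)
        finally have "int n < V^3" .
        with Bbound[OF V3] big show ?thesis by linarith
      qed
    next
      case False
      have tprime: "prime t"
        unfolding prime_nat_iff
      proof (intro conjI allI impI)
        show "1 < t" by (rule t1)
        fix m assume "m dvd t"
        then have "m > 0" "m \<le> t" using t0 by (auto intro: dvd_imp_le gr0I)
        show "m = 1 \<or> m = t"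
        proof (rule ccontr)
          assume "\<not> (m = 1 \<or> m = t)"
          then have "1 < m" "m < t" using \<open>m > 0\<close> \<open>m \<le> t\<close> by auto
          then show False using False \<open>m dvd t\<close> by blast
        qed
      qed
      show ?thesis
      proof (cases "t = p")
        case True
        then have "int (sigma 2 n) = 1 + int p^2 + (int p * int p)^2"
          using sigma_pp[OF pprime] nt by simp
        with E nt True have e2: "(V - 1) * (int p * int p) = V^2 - 4"
          by (simp add: power2_eq_square algebra_simps)
        show ?thesis
        proof (cases "V = 2")
          case True then show ?thesis using e2 p1 by simp
        next
          case False
          then have V3: "V \<ge> 3" using V by simp
          have "(V - 1) * (int p * int p) < (V - 1) * (V + 2)" using e2 V3
            by (simp add: power2_eq_square algebra_simps)
          then have "int p * int p < V + 2" using V3 by (simp add: mult_less_cancel_left)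
          then have "int n < V + 2" using nt True by simp
          with Bbound[OF V3] big show ?thesis by linarith
        qed
      next
        case False
        then show ?thesis using pprime tprime nt by blast
      qed
    qed
  qed
qed



lemma LW: "lucasV P (-1) (2*k) = Wc \<bar>P\<bar> k"
  using lucas_W by blast

lemma quad_roots:
  fixes q r1 r2 s :: int
  assumes "q^2 - s*q + r = 0" "r1 + r2 = s" "r1 * r2 = r"
  shows "q = r1 \<or> q = r2"
proof -
  have "(q - r1) * (q - r2) = q^2 - (r1+r2)*q + r1*r2" by (simp add: algebra_simps power2_eq_square)
  also have "\<dots> = 0" using assms by simp
  finally have "(q - r1) * (q - r2) = 0" .
  then show ?thesis by simp
qed

theorem theorem1p6:
  fixes P :: int and m n :: nat
  assumes "squarefree (P^2 + 4)"
    and "n > 0"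
    and "int (sigma 2 n) - int n ^ 2
           = lucasV P (-1) (2*m) * int n - (lucasV P (-1) (2*m))^2 + 5"
    and "int n > (\<bar>lucasV P (-1) (2*m)\<bar> + (lucasV P (-1) (2*m))^2 - 5) ^ 3"
  shows "(\<exists>k::nat. int n = lucasV P (-1) (2*k) * lucasV P (-1) (2*k + 2*m)
            \<and> prime (lucasV P (-1) (2*k)) \<and> prime (lucasV P (-1) (2*k + 2*m)))
       \<or> (\<exists>k::nat. k \<le> m \<and> m \<noteq> 2*k
            \<and> int n = lucasV P (-1) (2*k) * lucasV P (-1) (2*m - 2*k)
            \<and> prime (lucasV P (-1) (2*k)) \<and> prime (lucasV P (-1) (2*m - 2*k)))"
proof -
  define c where "c = \<bar>P\<bar>"
  have P0: "P \<noteq> 0"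
  proof
    assume "P = 0"
    then have "squarefree (4 :: int)" using assms(1) by simp
    moreover have "(2::int)^2 dvd 4" by simp
    ultimately have "(2::int) dvd 1" by (rule squarefreeD)
    then show False by simp
  qed
  then have c1: "c \<ge> 1" unfolding c_def by simp
  have cP: "c^2 = P^2" unfolding c_def by simp
  define V where "V = Wc c m"
  have LV: "\<And>k. lucasV P (-1) (2*k) = Wc c k" unfolding c_def by (rule LW)
  have V2: "V \<ge> 2" unfolding V_def using WS_pos[OF c1] by blast
  have E: "int (sigma 2 n) - int n ^ 2 = V * int n - V^2 + 5"
    using assms(3) unfolding LV V_def .
  have big: "int n > (\<bar>V\<bar> + V^2 - 5)^3" using assms(4) unfolding LV V_def .
  obtain p q where pq: "prime p" "prime q" "p \<noteq> q" "n = p*q"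
    using n_structure[OF V2 assms(2) E big] by blast
  have p2: "int p \<ge> 2" "int q \<ge> 2" using pq prime_ge_2_nat by (auto simp del: of_nat_le_iff simp: of_nat_le_iff[symmetric])
  have "int (sigma 2 n) = 1 + int p^2 + int q^2 + (int p * int q)^2"
    using sigma_pq[OF pq(1-3)] pq(4) by simp
  with E pq(4) have eq: "int q^2 - (V * int p) * int q + (int p^2 + V^2 - 4) = 0"
    by (simp add: algebra_simps power2_eq_square)
  define D where "D = c^2 + 4"
  define S where "S = Sc c m"
  have VS: "V^2 - 4 = D * S^2" using WS_norm[of c m] unfolding V_def S_def D_def by simp
  have sq: "(2 * int q - V * int p)^2 = (V^2 - 4) * (int p^2 - 4)"
    using eq by (simp add: algebra_simps power2_eq_square) 
  have m0: "m \<noteq> 0"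
  proof
    assume "m = 0"
    then have "V = 2" "S = 0" unfolding V_def S_def by simp_all
    then have "(2 * int q - 2 * int p)^2 = 0" using sq by simp
    then show False using pq(3) by simp
  qed
  then obtain m' where m': "m = Suc m'" by (cases m) auto
  have Spos: "S > 0" unfolding S_def m' using W_mono_step(2)[OF c1] by blast
  have "S^2 dvd (2 * int q - V * int p)^2" unfolding sq VS by simp
  then have "S dvd (2 * int q - V * int p)" by simp
  then obtain r where r: "2 * int q - V * int p = S * r" by blast
  have "S^2 * r^2 = S^2 * (D * (int p^2 - 4))"
    using sq unfolding r VS by (simp add: power_mult_distrib algebra_simps)
  then have rD: "r^2 = D * (int p^2 - 4)" using Spos by simp
  have Dsq: "squarefree D" using assms(1) unfolding D_def cP .
  have "D dvd r" using sqf_dvd[OF Dsq] rD by simp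
  then obtain y where y: "r = D * y" by blast
  have D0: "D > 0" unfolding D_def by (simp add: add_nonneg_pos)
  have "D * (D * y^2) = D * (int p^2 - 4)" using rD unfolding y by (simp add: power2_eq_square algebra_simps)
  then have "int p^2 - 4 = D * y^2" using D0 by simp
  then have "(int p)^2 - (c^2+4) * \<bar>y\<bar>^2 = 4" unfolding D_def by simp
  then obtain k where k: "int p = Wc c k" using pell[OF c1, of "int p" "\<bar>y\<bar>"] p2 by auto
  have eqk: "int q^2 - (Wc c k * V) * int q + (Wc c (2*k) + Wc c (2*m)) = 0"
    using eq unfolding k W_double V_def by (simp add: algebra_simps)
  have pp: "prime (int p)" "prime (int q)" using pq by simp_all
  show ?thesis
  proof (cases "m \<le> k")
    case True
    have s: "Wc c (k+m) + Wc c (k-m) = Wc c k * V" unfolding V_def using W_prod[OF True] by simp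
    have pr: "Wc c (k+m) * Wc c (k-m) = Wc c (2*k) + Wc c (2*m)"
      using W_prod[of "k-m" "k+m" c] True by (simp add: mult_2)
    have "int q = Wc c (k+m) \<or> int q = Wc c (k-m)" using quad_roots[OF eqk s pr] .
    then show ?thesis
    proof
      assume qe: "int q = Wc c (k+m)"
      have "int n = lucasV P (-1) (2*k) * lucasV P (-1) (2*k + 2*m)"
        using pq(4) k qe LV[of "k+m"] LV[of k] by (simp add: add_mult_distrib2)
      moreover have "prime (lucasV P (-1) (2*k))" "prime (lucasV P (-1) (2*k + 2*m))"
        using pp k qe LV[of "k+m"] LV[of k] by (simp_all add: add_mult_distrib2)
      ultimately show ?thesis by blast
    next
      assume qe: "int q = Wc c (k-m)"
      have kk: "k - m + m = k" using True by simp
      have "int n = lucasV P (-1) (2*(k-m)) * lucasV P (-1) (2*(k-m) + 2*m)"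
        using pq(4) k qe LV[of "k-m"] LV[of k] unfolding add_mult_distrib2[symmetric] kk by simp
      moreover have "prime (lucasV P (-1) (2*(k-m)))" "prime (lucasV P (-1) (2*(k-m) + 2*m))"
        using pp k qe LV[of "k-m"] LV[of k] unfolding add_mult_distrib2[symmetric] kk by simp_all
      ultimately show ?thesis by blast
    qed
  next
    case False
    then have km: "k \<le> m" by simp
    have s: "Wc c (k+m) + Wc c (m-k) = Wc c k * V" unfolding V_def using W_prod[OF km]
      by (simp add: ac_simps)
    have pr: "Wc c (k+m) * Wc c (m-k) = Wc c (2*k) + Wc c (2*m)"
      using W_prod[of "m-k" "k+m" c] km by (simp add: mult_2)
    have "int q = Wc c (k+m) \<or> int q = Wc c (m-k)" using quad_roots[OF eqk s pr] .
    then show ?thesis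
    proof
      assume qe: "int q = Wc c (k+m)"
      have "int n = lucasV P (-1) (2*k) * lucasV P (-1) (2*k + 2*m)"
        using pq(4) k qe LV[of "k+m"] LV[of k] by (simp add: add_mult_distrib2)
      moreover have "prime (lucasV P (-1) (2*k))" "prime (lucasV P (-1) (2*k + 2*m))"
        using pp k qe LV[of "k+m"] LV[of k] by (simp_all add: add_mult_distrib2)
      ultimately show ?thesis by blast
    next
      assume qe: "int q = Wc c (m-k)"
      have mk: "m \<noteq> 2*k"
      proof
        assume "m = 2*k"
        then have "m - k = k" by simp
        then have "int q = int p" using qe k by simp
        then show False using pq(3) by simp
      qed
      have dd: "2*m - 2*k = 2*(m-k)" by simp
      have "int n = lucasV P (-1) (2*k) * lucasV P (-1) (2*m - 2*k)"
        using pq(4) k qe LV[of "m-k"] LV[of k] unfolding dd by simp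
      moreover have "prime (lucasV P (-1) (2*k))" "prime (lucasV P (-1) (2*m - 2*k))"
        using pp k qe LV[of "m-k"] LV[of k] unfolding dd by simp_all
      ultimately show ?thesis using km mk by blast
    qed
  qed
qed

end
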